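(* Let $(\mathcal M,[g],\nabla)$ be a three-dimensional Weyl structure with $[g]$ of Euclidean (positive definite) signature, with non-closed Weyl 1-form $\nu$ (i.e. ${\rm d}\nu\neq 0$), which is Einstein-Weyl and has reduced holonomy. Then the Weyl structure is flat.
   Context: A Weyl structure on a real $n$-manifold $\mathcal M$ consists of a conformal class $[g]$ of metrics of signature $(p,q)$ and a torsion-free connection $\nabla$ such that for each representative $g\in[g]$ there is a 1-form $\nu$ with $\nabla g=-2\nu\otimes g$; under $g\to e^{2\phi}g$ one has $\nu\to\nu-{\rm d}\phi$, so ${\rm d}\nu$ is independent of the representative. The structure is equivalently a torsion-free connection on the $CO(p,q)$-bundle of conformal frames, where $CO(p,q)=\mathbb R_+\times O(p,q)$ with Lie algebra $\mathfrak{co}(p,q)=\mathbb R\oplus\mathfrak{o}(p,q)$. In an orthonormal coframe $(\theta^i)$ of a representative $g=g_{ij}\theta^i\theta^j$ ($g_{ij}$ constant), the connection 1-forms $\Gamma^i{}_j$ are determined by ${\rm d}\theta^i+\Gamma^i{}_j\wedge\theta^j=0$ and $\Gamma_{(ij)}=g_{ij}\nu$ with $\Gamma_{ij}=g_{ik}\Gamma^k{}_j$. The structure has reduced holonomy if its (local) holonomy group is a proper subgroup of $CO(p,q)$, i.e. locally the connection can be reduced so that $(\Gamma^i{}_j)$ takes values in a proper subalgebra of $\mathfrak{co}(p,q)$. The curvature is $\Omega^i{}_j={\rm d}\Gamma^i{}_j+\Gamma^i{}_k\wedge\Gamma^k{}_j=\tfrac12\Omega^i{}_{jkl}\theta^k\wedge\theta^l$,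 the Ricci tensor ${\rm Ric}_{ij}=\Omega^k{}_{ikj}$, the Ricci scalar $R={\rm Ric}_{ij}g^{ij}$. The structure is Einstein-Weyl if ${\rm Ric}_{(ij)}-\tfrac1n R\,g_{ij}=0$, and flat if $\Omega=0$. *)

theory Defs
  imports "HOL-Analysis.Analysis"
begin

text \<open>Local model: a Weyl structure on an open set U of R^3 (coordinates x^a, a :: 3).
  The conformal class is given by a representative g = sum_i theta^i theta^i, where the
  orthonormal coframe is theta^i = sum_a e x $ i $ a dx^a (Euclidean signature, g_ij = delta_ij).
  The Weyl 1-form is nu = sum_a nu x $ a dx^a; connection 1-forms
  Gamma^i_j = sum_a Gamma x a $ i $ j dx^a.\<close>

definition kd :: "3 \<Rightarrow> 3 \<Rightarrow> real" where
  "kd i j = (if i = j then 1 else 0)"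

definition pd :: "3 \<Rightarrow> (real^3 \<Rightarrow> real) \<Rightarrow> real^3 \<Rightarrow> real" where
  "pd a f x = frechet_derivative f (at x) (axis a 1)"

fun ipd :: "3 list \<Rightarrow> (real^3 \<Rightarrow> real) \<Rightarrow> real^3 \<Rightarrow> real" where
  "ipd [] f = f"
| "ipd (a # ds) f = pd a (ipd ds f)"

definition smooth_on :: "(real^3) set \<Rightarrow> (real^3 \<Rightarrow> real) \<Rightarrow> bool" where
  "smooth_on U f \<longleftrightarrow> (\<forall>ds. ipd ds f differentiable_on U)"

text \<open>co(3) = R + o(3) and CO(3) = R_+ x O(3) as matrices.\<close>
definition co3 :: "(real^3^3) set" where
  "co3 = {M. \<exists>c. \<forall>i j. M $ i $ j + M $ j $ i = 2 * c * kd i j}"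

definition CO3 :: "(real^3^3) set" where
  "CO3 = {M. \<exists>l>0. \<exists>R. orthogonal_matrix R \<and> M = l *\<^sub>R R}"

definition lie_subalgebra :: "(real^3^3) set \<Rightarrow> bool" where
  "lie_subalgebra h \<longleftrightarrow> subspace h \<and> (\<forall>X\<in>h. \<forall>Y\<in>h. X ** Y - Y ** X \<in> h)"

text \<open>Torsion-free Weyl connection forms: d theta^i + Gamma^i_j /\ theta^j = 0 and
  Gamma_(ij) = g_ij nu.\<close>
definition weyl_connection ::
  "(real^3) set \<Rightarrow> (real^3 \<Rightarrow> real^3^3) \<Rightarrow> (real^3 \<Rightarrow> real^3) \<Rightarrow> (real^3 \<Rightarrow> 3 \<Rightarrow> real^3^3) \<Rightarrow> bool" where
  "weyl_connection U e \<nu> \<Gamma> \<longleftrightarrow> (\<forall>x\<in>U.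
     (\<forall>i a b. pd a (\<lambda>y. e y $ i $ b) x - pd b (\<lambda>y. e y $ i $ a) x
        + (\<Sum>j\<in>UNIV. \<Gamma> x a $ i $ j * e x $ j $ b - \<Gamma> x b $ i $ j * e x $ j $ a) = 0) \<and>
     (\<forall>a i j. (\<Gamma> x a $ i $ j + \<Gamma> x a $ j $ i) / 2 = kd i j * \<nu> x $ a))"

text \<open>Curvature 2-form Omega^i_j = d Gamma^i_j + Gamma^i_k /\ Gamma^k_j, coordinate components
  (Omega^i_j = 1/2 sum_ab curv .. a b dx^a /\ dx^b).\<close>
definition curv :: "(real^3 \<Rightarrow> 3 \<Rightarrow> real^3^3) \<Rightarrow> real^3 \<Rightarrow> 3 \<Rightarrow> 3 \<Rightarrow> 3 \<Rightarrow> 3 \<Rightarrow> real" where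
  "curv \<Gamma> x i j a b = pd a (\<lambda>y. \<Gamma> y b $ i $ j) x - pd b (\<lambda>y. \<Gamma> y a $ i $ j) x
     + (\<Sum>k\<in>UNIV. \<Gamma> x a $ i $ k * \<Gamma> x b $ k $ j - \<Gamma> x b $ i $ k * \<Gamma> x a $ k $ j)"

text \<open>Frame components Omega^i_{jkl} (dx^a = sum_k (e^{-1}) $ a $ k theta^k).\<close>
definition curvF :: "(real^3 \<Rightarrow> real^3^3) \<Rightarrow> (real^3 \<Rightarrow> 3 \<Rightarrow> real^3^3) \<Rightarrow> real^3 \<Rightarrow> 3 \<Rightarrow> 3 \<Rightarrow> 3 \<Rightarrow> 3 \<Rightarrow> real" where
  "curvF e \<Gamma> x i j k l = (\<Sum>a\<in>UNIV. \<Sum>b\<in>UNIV.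
      curv \<Gamma> x i j a b * matrix_inv (e x) $ a $ k * matrix_inv (e x) $ b $ l)"

definition ricci :: "(real^3 \<Rightarrow> real^3^3) \<Rightarrow> (real^3 \<Rightarrow> 3 \<Rightarrow> real^3^3) \<Rightarrow> real^3 \<Rightarrow> 3 \<Rightarrow> 3 \<Rightarrow> real" where
  "ricci e \<Gamma> x i j = (\<Sum>k\<in>UNIV. curvF e \<Gamma> x k i k j)"

definition scal :: "(real^3 \<Rightarrow> real^3^3) \<Rightarrow> (real^3 \<Rightarrow> 3 \<Rightarrow> real^3^3) \<Rightarrow> real^3 \<Rightarrow> real" where
  "scal e \<Gamma> x = (\<Sum>i\<in>UNIV. ricci e \<Gamma> x i i)"

definition einstein_weyl :: "(real^3) set \<Rightarrow> (real^3 \<Rightarrow> real^3^3) \<Rightarrow> (real^3 \<Rightarrow> 3 \<Rightarrow> real^3^3) \<Rightarrow> bool" where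
  "einstein_weyl U e \<Gamma> \<longleftrightarrow> (\<forall>x\<in>U. \<forall>i j.
     (ricci e \<Gamma> x i j + ricci e \<Gamma> x j i) / 2 - scal e \<Gamma> x / 3 * kd i j = 0)"

definition flat_on :: "(real^3) set \<Rightarrow> (real^3 \<Rightarrow> 3 \<Rightarrow> real^3^3) \<Rightarrow> bool" where
  "flat_on U \<Gamma> \<longleftrightarrow> (\<forall>x\<in>U. \<forall>i j a b. curv \<Gamma> x i j a b = 0)"

definition reduced_on :: "(real^3) set \<Rightarrow> (real^3 \<Rightarrow> 3 \<Rightarrow> real^3^3) \<Rightarrow> bool" where
  "reduced_on V \<Gamma> \<longleftrightarrow> (\<exists>h A. lie_subalgebra h \<and> h \<subseteq> co3 \<and> h \<noteq> co3 \<and>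
     (\<forall>i j. smooth_on V (\<lambda>x. A x $ i $ j)) \<and>
     (\<forall>x\<in>V. A x \<in> CO3 \<and>
        (\<forall>a. matrix_inv (A x) ** \<Gamma> x a ** A x
              + matrix_inv (A x) ** (\<chi> i j. pd a (\<lambda>y. A y $ i $ j) x) \<in> h)))"

definition reduced_holonomy :: "(real^3) set \<Rightarrow> (real^3 \<Rightarrow> 3 \<Rightarrow> real^3^3) \<Rightarrow> bool" where
  "reduced_holonomy U \<Gamma> \<longleftrightarrow> (\<forall>p\<in>U. \<exists>V. open V \<and> p \<in> V \<and> V \<subseteq> U \<and> reduced_on V \<Gamma>)"

definition dform_nonzero_at :: "(real^3 \<Rightarrow> real^3) \<Rightarrow> real^3 \<Rightarrow> bool" where
  "dform_nonzero_at \<nu> x \<longleftrightarrow> (\<exists>a b. pd a (\<lambda>y. \<nu> y $ b) x - pd b (\<lambda>y. \<nu> y $ a) x \<noteq> 0)"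

end

theory Submission
  imports Defs
begin

lemma pd_eq:
  assumes "(f has_derivative F) (at x)"
  shows "pd a f x = F (axis a 1)"
  using frechet_derivative_at[OF assms] by (simp add: pd_def)

lemma pd_works:
  assumes "f differentiable (at x)"
  shows "(f has_derivative frechet_derivative f (at x)) (at x)"
  using assms frechet_derivative_works by blast

lemma pd_add:
  assumes "f differentiable (at x)" "g differentiable (at x)"
  shows "pd a (\<lambda>y. f y + g y) x = pd a f x + pd a g x"
proof -
  have "((\<lambda>y. f y + g y) has_derivative (\<lambda>h. frechet_derivative f (at x) h + frechet_derivative g (at x) h)) (at x)"
    by (intro has_derivative_add pd_works assms)
  from pd_eq[OF this, of a] show ?thesis by (simp add: pd_def mult.commute)
qed

lemma pd_diff:
  assumes "f differentiable (at x)" "g differentiable (at x)"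
  shows "pd a (\<lambda>y. f y - g y) x = pd a f x - pd a g x"
proof -
  have "((\<lambda>y. f y - g y) has_derivative (\<lambda>h. frechet_derivative f (at x) h - frechet_derivative g (at x) h)) (at x)"
    by (intro has_derivative_diff pd_works assms)
  from pd_eq[OF this, of a] show ?thesis by (simp add: pd_def mult.commute)
qed

lemma pd_mult:
  assumes "f differentiable (at x)" "g differentiable (at x)"
  shows "pd a (\<lambda>y. f y * g y) x = pd a f x * g x + f x * pd a g x"
proof -
  have "((\<lambda>y. f y * g y) has_derivative (\<lambda>h. f x * frechet_derivative g (at x) h + frechet_derivative f (at x) h * g x)) (at x)"
    by (intro has_derivative_mult pd_works assms)
  from pd_eq[OF this, of a] show ?thesis by (simp add: pd_def mult.commute)
qed

lemma pd_sum:
  assumes "finite I" "\<And>i. i \<in> I \<Longrightarrow> f i differentiable (at x)"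
  shows "pd a (\<lambda>y. \<Sum>i\<in>I. f i y) x = (\<Sum>i\<in>I. pd a (f i) x)"
proof -
  have "((\<lambda>y. \<Sum>i\<in>I. f i y) has_derivative (\<lambda>h. \<Sum>i\<in>I. frechet_derivative (f i) (at x) h)) (at x)"
    by (intro has_derivative_sum pd_works assms)
  from pd_eq[OF this, of a] show ?thesis by (simp add: pd_def mult.commute)
qed

lemma pd_const: "pd a (\<lambda>y. c) x = 0"
proof -
  have "((\<lambda>y. c) has_derivative (\<lambda>h. 0)) (at x)" by simp
  from pd_eq[OF this, of a] show ?thesis by simp
qed

lemma pd_local:
  assumes "open S" "x \<in> S" "\<And>y. y \<in> S \<Longrightarrow> f y = g y"
  shows "pd a f x = pd a g x"
proof -
  have "(\<lambda>F. (f has_derivative F) (at x)) = (\<lambda>F. (g has_derivative F) (at x))"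
  proof
    fix F
    show "(f has_derivative F) (at x) = (g has_derivative F) (at x)"
      using has_derivative_transform_within_open[OF _ assms(1,2), where f=f and f'=F and g=g and t=UNIV]
        has_derivative_transform_within_open[OF _ assms(1,2), where f=g and f'=F and g=f and t=UNIV] assms(3)
      by auto
  qed
  then show ?thesis by (simp add: pd_def frechet_derivative_def)
qed

lemma differentiable_local:
  assumes "open S" "x \<in> S" "\<And>y. y \<in> S \<Longrightarrow> f y = g y" "f differentiable (at x)"
  shows "g differentiable (at x)"
  using assms has_derivative_transform_within_open unfolding differentiable_def by metis

lemma ipd_append: "ipd (ds @ [a]) f = ipd ds (pd a f)"
  by (induction ds) auto

lemma smooth_pd: "smooth_on U f \<Longrightarrow> smooth_on U (pd a f)"
  unfolding smooth_on_def by (metis ipd_append)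

lemma smooth_diff_at: "smooth_on U f \<Longrightarrow> open U \<Longrightarrow> x \<in> U \<Longrightarrow> f differentiable (at x)"
  unfolding smooth_on_def
  by (metis differentiable_on_eq_differentiable_at ipd.simps(1))

lemma smooth_mono: "smooth_on U f \<Longrightarrow> V \<subseteq> U \<Longrightarrow> smooth_on V f"
  unfolding smooth_on_def using differentiable_on_subset by blast

lemma line_deriv:
  fixes f :: "real^3 \<Rightarrow> real"
  assumes "f differentiable (at (z + t *\<^sub>R w))"
  shows "((\<lambda>s. f (z + s *\<^sub>R w)) has_real_derivative frechet_derivative f (at (z + t *\<^sub>R w)) w) (at t)"
proof -
  let ?F = "frechet_derivative f (at (z + t *\<^sub>R w))"
  have 1: "((\<lambda>s. z + s *\<^sub>R w) has_derivative (\<lambda>s. s *\<^sub>R w)) (at t)"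
    by (auto intro!: derivative_eq_intros)
  have 2: "(f has_derivative ?F) (at ((\<lambda>s. z + s *\<^sub>R w) t))"
    using pd_works[OF assms] by simp
  have 3: "((f \<circ> (\<lambda>s. z + s *\<^sub>R w)) has_derivative (?F \<circ> (\<lambda>s. s *\<^sub>R w))) (at t)"
    by (rule diff_chain_at[OF 1 2])
  have lin: "linear ?F" using has_derivative_linear[OF 2] .
  have "(?F \<circ> (\<lambda>s. s *\<^sub>R w)) = (\<lambda>s. ?F w * s)"
    using linear_scale[OF lin] by (auto simp: o_def mult.commute)
  with 3 show ?thesis
    by (simp add: has_field_derivative_def o_def)
qed

lemma delta_rep:
  fixes f :: "real^3 \<Rightarrow> real"
  assumes h: "h > 0"
    and inV: "\<And>s t. 0 \<le> s \<Longrightarrow> s \<le> h \<Longrightarrow> 0 \<le> t \<Longrightarrow> t \<le> h \<Longrightarrow> x + s *\<^sub>R axis a 1 + t *\<^sub>R axis b 1 \<in> V"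
    and d0: "\<forall>y\<in>V. f differentiable at y"
    and da: "\<forall>y\<in>V. pd a f differentiable at y"
  shows "\<exists>s t. 0 \<le> s \<and> s \<le> h \<and> 0 \<le> t \<and> t \<le> h \<and>
     f (x + h *\<^sub>R axis a 1 + h *\<^sub>R axis b 1) - f (x + h *\<^sub>R axis a 1) - f (x + h *\<^sub>R axis b 1) + f x
       = h^2 * pd b (pd a f) (x + s *\<^sub>R axis a 1 + t *\<^sub>R axis b 1)"
proof -
  define u where "u = (axis a 1 :: real^3)"
  define v where "v = (axis b 1 :: real^3)"
  define \<phi> where "\<phi> s = f ((x + h *\<^sub>R v) + s *\<^sub>R u) - f (x + s *\<^sub>R u)" for s
  have "\<exists>s1. 0 < s1 \<and> s1 < h \<and> \<phi> h - \<phi> 0 = (h - 0) * (pd a f ((x + h *\<^sub>R v) + s1 *\<^sub>R u) - pd a f (x + s1 *\<^sub>R u))"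
  proof (rule MVT2[OF h])
    fix s assume s: "0 \<le> s" "s \<le> h"
    have m1: "(x + h *\<^sub>R v) + s *\<^sub>R u \<in> V"
      using inV[OF s, of h] h by (simp add: u_def v_def algebra_simps)
    have m2: "x + s *\<^sub>R u \<in> V"
      using inV[OF s, of 0] h by (simp add: u_def v_def algebra_simps)
    have "((\<lambda>s. f ((x + h *\<^sub>R v) + s *\<^sub>R u)) has_real_derivative pd a f ((x + h *\<^sub>R v) + s *\<^sub>R u)) (at s)"
      using line_deriv[of f "x + h *\<^sub>R v" s u] d0 m1 by (simp add: pd_def u_def)
    moreover have "((\<lambda>s. f (x + s *\<^sub>R u)) has_real_derivative pd a f (x + s *\<^sub>R u)) (at s)"
      using line_deriv[of f x s u] d0 m2 by (simp add: pd_def u_def)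
    ultimately show "DERIV \<phi> s :> pd a f ((x + h *\<^sub>R v) + s *\<^sub>R u) - pd a f (x + s *\<^sub>R u)"
      unfolding \<phi>_def by (rule DERIV_diff)
  qed
  then obtain s1 where s1: "0 < s1" "s1 < h"
    and e1: "\<phi> h - \<phi> 0 = h * (pd a f ((x + s1 *\<^sub>R u) + h *\<^sub>R v) - pd a f ((x + s1 *\<^sub>R u) + 0 *\<^sub>R v))"
    by (auto simp: algebra_simps)
  define \<psi> where "\<psi> t = pd a f ((x + s1 *\<^sub>R u) + t *\<^sub>R v)" for t
  have "\<exists>t1. 0 < t1 \<and> t1 < h \<and> \<psi> h - \<psi> 0 = (h - 0) * pd b (pd a f) ((x + s1 *\<^sub>R u) + t1 *\<^sub>R v)"
  proof (rule MVT2[OF h])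
    fix t assume t: "0 \<le> t" "t \<le> h"
    have m: "(x + s1 *\<^sub>R u) + t *\<^sub>R v \<in> V"
      using inV[of s1 t] s1 t by (simp add: u_def v_def algebra_simps)
    show "DERIV \<psi> t :> pd b (pd a f) ((x + s1 *\<^sub>R u) + t *\<^sub>R v)"
      unfolding \<psi>_def using line_deriv[of "pd a f" "x + s1 *\<^sub>R u" t v] da m
      by (simp add: pd_def v_def)
  qed
  then obtain t1 where t1: "0 < t1" "t1 < h"
    and e2: "\<psi> h - \<psi> 0 = h * pd b (pd a f) ((x + s1 *\<^sub>R u) + t1 *\<^sub>R v)" by auto
  have "f (x + h *\<^sub>R u + h *\<^sub>R v) - f (x + h *\<^sub>R u) - f (x + h *\<^sub>R v) + f x = \<phi> h - \<phi> 0"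
    by (simp add: \<phi>_def algebra_simps)
  also have "\<dots> = h * (\<psi> h - \<psi> 0)" using e1 by (simp add: \<psi>_def)
  also have "\<dots> = h^2 * pd b (pd a f) (x + s1 *\<^sub>R u + t1 *\<^sub>R v)"
    using e2 by (simp add: power2_eq_square)
  finally show ?thesis using s1 t1 unfolding u_def v_def
    by (intro exI[of _ s1] exI[of _ t1]) auto
qed

lemma schwarz:
  fixes f :: "real^3 \<Rightarrow> real"
  assumes V: "open V" "x \<in> V"
    and d0: "\<forall>y\<in>V. f differentiable at y"
    and da: "\<forall>y\<in>V. pd a f differentiable at y"
    and db: "\<forall>y\<in>V. pd b f differentiable at y"
    and ca: "continuous (at x) (pd b (pd a f))"
    and cb: "continuous (at x) (pd a (pd b f))"
  shows "pd b (pd a f) x = pd a (pd b f) x"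
proof -
  obtain r where r: "r > 0" "ball x r \<subseteq> V" using V openE by blast
  have key: "\<bar>pd b (pd a f) x - pd a (pd b f) x\<bar> < 2 * e" if e: "e > 0" for e
  proof -
    obtain d1 where d1: "d1 > 0" "\<And>y. dist y x < d1 \<Longrightarrow> dist (pd b (pd a f) y) (pd b (pd a f) x) < e"
      using ca e unfolding continuous_at_eps_delta by blast
    obtain d2 where d2: "d2 > 0" "\<And>y. dist y x < d2 \<Longrightarrow> dist (pd a (pd b f) y) (pd a (pd b f) x) < e"
      using cb e unfolding continuous_at_eps_delta by blast
    define h where "h = min r (min d1 d2) / 3"
    have h: "h > 0" using r d1 d2 by (simp add: h_def)
    have close: "dist (x + s *\<^sub>R axis c 1 + t *\<^sub>R axis d 1) x < min r (min d1 d2)"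
      if "0 \<le> s" "s \<le> h" "0 \<le> t" "t \<le> h" for s t and c d :: 3
    proof -
      have "dist (x + s *\<^sub>R axis c 1 + t *\<^sub>R axis d 1) x = norm (s *\<^sub>R axis c 1 + t *\<^sub>R axis d (1::real))"
        by (simp add: dist_norm)
      also have "\<dots> \<le> norm (s *\<^sub>R axis c (1::real)) + norm (t *\<^sub>R axis d (1::real))" by (rule norm_triangle_ineq)
      also have "\<dots> = s + t" using that by simp
      also have "\<dots> < min r (min d1 d2)" using that h unfolding h_def by linarith
      finally show ?thesis .
    qed
    have inV: "x + s *\<^sub>R axis c 1 + t *\<^sub>R axis d 1 \<in> V"
      if "0 \<le> s" "s \<le> h" "0 \<le> t" "t \<le> h" for s t and c d :: 3
      using close[OF that, of c d] r(2) by (auto simp: dist_commute)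
    obtain s t where st: "0 \<le> s" "s \<le> h" "0 \<le> t" "t \<le> h"
      and E1: "f (x + h *\<^sub>R axis a 1 + h *\<^sub>R axis b 1) - f (x + h *\<^sub>R axis a 1) - f (x + h *\<^sub>R axis b 1) + f x
       = h^2 * pd b (pd a f) (x + s *\<^sub>R axis a 1 + t *\<^sub>R axis b 1)"
      using delta_rep[OF h inV d0 da] by blast
    obtain s' t' where st': "0 \<le> s'" "s' \<le> h" "0 \<le> t'" "t' \<le> h"
      and E2: "f (x + h *\<^sub>R axis b 1 + h *\<^sub>R axis a 1) - f (x + h *\<^sub>R axis b 1) - f (x + h *\<^sub>R axis a 1) + f x
       = h^2 * pd a (pd b f) (x + s' *\<^sub>R axis b 1 + t' *\<^sub>R axis a 1)"
      using delta_rep[OF h inV d0 db] by blast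
    have "h^2 * pd b (pd a f) (x + s *\<^sub>R axis a 1 + t *\<^sub>R axis b 1) = h^2 * pd a (pd b f) (x + s' *\<^sub>R axis b 1 + t' *\<^sub>R axis a 1)"
      using E1 E2 by (simp add: algebra_simps)
    then have eq: "pd b (pd a f) (x + s *\<^sub>R axis a 1 + t *\<^sub>R axis b 1) = pd a (pd b f) (x + s' *\<^sub>R axis b 1 + t' *\<^sub>R axis a 1)"
      using h by simp
    have "dist (pd b (pd a f) (x + s *\<^sub>R axis a 1 + t *\<^sub>R axis b 1)) (pd b (pd a f) x) < e"
      using d1(2) close[OF st, of a b] by simp
    moreover have "dist (pd a (pd b f) (x + s' *\<^sub>R axis b 1 + t' *\<^sub>R axis a 1)) (pd a (pd b f) x) < e"
      using d2(2) close[OF st', of b a] by simp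
    ultimately show ?thesis using eq by (simp add: dist_real_def)
  qed
  show ?thesis
  proof (rule ccontr)
    assume ne: "pd b (pd a f) x \<noteq> pd a (pd b f) x"
    let ?d = "\<bar>pd b (pd a f) x - pd a (pd b f) x\<bar>"
    have "?d > 0" using ne by simp
    then have "?d / 4 > 0" by simp
    then have "?d < 2 * (?d / 4)" by (rule key)
    then show False using \<open>?d > 0\<close> by simp
  qed
qed

lemma schwarz_smooth:
  assumes "smooth_on V f" "open V" "x \<in> V"
  shows "pd b (pd a f) x = pd a (pd b f) x"
proof (rule schwarz[OF assms(2,3)])
  show "\<forall>y\<in>V. f differentiable at y" "\<forall>y\<in>V. pd a f differentiable at y" "\<forall>y\<in>V. pd b f differentiable at y"
    using assms smooth_diff_at smooth_pd by blast+
  show "continuous (at x) (pd b (pd a f))" "continuous (at x) (pd a (pd b f))"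
    using assms smooth_diff_at smooth_pd differentiable_imp_continuous_within by blast+
qed

definition mpd :: "3 \<Rightarrow> (real^3 \<Rightarrow> real^3^3) \<Rightarrow> real^3 \<Rightarrow> real^3^3" where
  "mpd a F x = (\<chi> i j. pd a (\<lambda>y. F y $ i $ j) x)"

definition mdiff :: "(real^3 \<Rightarrow> real^3^3) \<Rightarrow> real^3 \<Rightarrow> bool" where
  "mdiff F x \<longleftrightarrow> (\<forall>i j. (\<lambda>y. F y $ i $ j) differentiable (at x))"

lemma matrix_sub_ldistrib: "(A::real^3^3) ** (B - C) = A ** B - A ** C"
  by (vector matrix_matrix_mult_def sum_subtractf[symmetric] field_simps)
lemma matrix_add_rdistrib: "((B::real^3^3) + C) ** A = B ** A + C ** A"
  by (vector matrix_matrix_mult_def sum.distrib[symmetric] field_simps)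
lemma matrix_sub_rdistrib: "((B::real^3^3) - C) ** A = B ** A - C ** A"
  by (vector matrix_matrix_mult_def sum_subtractf[symmetric] field_simps)

lemma mdiff_mult:
  assumes "mdiff F x" "mdiff G x"
  shows "mdiff (\<lambda>y. F y ** G y) x"
  using assms unfolding mdiff_def matrix_matrix_mult_def
  by (auto intro!: differentiable_sum differentiable_mult)

lemma mdiff_add: "mdiff F x \<Longrightarrow> mdiff G x \<Longrightarrow> mdiff (\<lambda>y. F y + G y) x"
  unfolding mdiff_def by (auto intro!: differentiable_add)

lemma mdiff_diff: "mdiff F x \<Longrightarrow> mdiff G x \<Longrightarrow> mdiff (\<lambda>y. F y - G y) x"
  unfolding mdiff_def by (auto intro!: differentiable_diff)

lemma mpd_mult:
  assumes "mdiff F x" "mdiff G x"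
  shows "mpd a (\<lambda>y. F y ** G y) x = mpd a F x ** G x + F x ** mpd a G x"
proof -
  have "pd a (\<lambda>y. \<Sum>k\<in>UNIV. F y $ i $ k * G y $ k $ j) x
      = (\<Sum>k\<in>UNIV. pd a (\<lambda>y. F y $ i $ k) x * G x $ k $ j) + (\<Sum>k\<in>UNIV. F x $ i $ k * pd a (\<lambda>y. G y $ k $ j) x)"
    for i j
  proof -
    have "pd a (\<lambda>y. \<Sum>k\<in>UNIV. F y $ i $ k * G y $ k $ j) x = (\<Sum>k\<in>UNIV. pd a (\<lambda>y. F y $ i $ k * G y $ k $ j) x)"
      using assms unfolding mdiff_def by (intro pd_sum) (auto intro!: differentiable_mult)
    also have "\<dots> = (\<Sum>k\<in>UNIV. pd a (\<lambda>y. F y $ i $ k) x * G x $ k $ j + F x $ i $ k * pd a (\<lambda>y. G y $ k $ j) x)"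
      using assms unfolding mdiff_def by (intro sum.cong refl pd_mult) auto
    finally show ?thesis by (simp add: sum.distrib)
  qed
  then show ?thesis
    by (simp add: mpd_def matrix_matrix_mult_def vec_eq_iff)
qed

lemma mpd_diff:
  assumes "mdiff F x" "mdiff G x"
  shows "mpd a (\<lambda>y. F y - G y) x = mpd a F x - mpd a G x"
proof -
  have "pd a (\<lambda>y. F y $ i $ j - G y $ i $ j) x = pd a (\<lambda>y. F y $ i $ j) x - pd a (\<lambda>y. G y $ i $ j) x" for i j
    using assms unfolding mdiff_def by (intro pd_diff) auto
  then show ?thesis unfolding mpd_def vec_eq_iff by simp
qed

lemma mpd_local:
  assumes "open S" "x \<in> S" "\<And>y. y \<in> S \<Longrightarrow> F y = G y"
  shows "mpd a F x = mpd a G x"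
proof -
  have "pd a (\<lambda>y. F y $ i $ j) x = pd a (\<lambda>y. G y $ i $ j) x" for i j
    by (rule pd_local[OF assms(1,2)]) (simp add: assms(3))
  then show ?thesis unfolding mpd_def vec_eq_iff by simp
qed

lemma mdiff_local:
  assumes "open S" "x \<in> S" "\<And>y. y \<in> S \<Longrightarrow> F y = G y" "mdiff F x"
  shows "mdiff G x"
  unfolding mdiff_def
proof (intro allI)
  fix i j
  show "(\<lambda>y. G y $ i $ j) differentiable (at x)"
    by (rule differentiable_local[OF assms(1,2), of "\<lambda>y. F y $ i $ j"]) (use assms(3,4) mdiff_def in auto)
qed

lemma mpd_in_subspace:
  assumes h: "subspace (h :: (real^3^3) set)" and V: "open V" "x \<in> V"
    and Fh: "\<And>y. y \<in> V \<Longrightarrow> F y \<in> h" and d: "mdiff F x"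
  shows "mpd a F x \<in> h"
proof -
  have "mpd a F x \<in> orthogonal_comp (orthogonal_comp h)"
    unfolding orthogonal_comp_def orthogonal_def mem_Collect_eq
  proof
    fix N :: "real^3^3" assume N: "N \<in> {x. \<forall>y\<in>h. y \<bullet> x = 0}"
    have 0: "(\<Sum>i\<in>UNIV. \<Sum>j\<in>UNIV. N $ i $ j * F y $ i $ j) = 0" if "y \<in> V" for y
    proof -
      have "F y \<bullet> N = 0" using N Fh[OF that] by auto
      then show ?thesis by (simp add: inner_vec_def mult.commute)
    qed
    have "pd a (\<lambda>y. \<Sum>i\<in>UNIV. \<Sum>j\<in>UNIV. N $ i $ j * F y $ i $ j) x = pd a (\<lambda>y. 0) x"
      using 0 by (intro pd_local[OF V]) auto
    also have "\<dots> = 0" by (rule pd_const)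
    finally have 1: "pd a (\<lambda>y. \<Sum>i\<in>UNIV. \<Sum>j\<in>UNIV. N $ i $ j * F y $ i $ j) x = 0" .
    have "pd a (\<lambda>y. \<Sum>i\<in>UNIV. \<Sum>j\<in>UNIV. N $ i $ j * F y $ i $ j) x
        = (\<Sum>i\<in>UNIV. pd a (\<lambda>y. \<Sum>j\<in>UNIV. N $ i $ j * F y $ i $ j) x)"
      using d unfolding mdiff_def by (intro pd_sum) (auto intro!: differentiable_sum differentiable_mult)
    also have "\<dots> = (\<Sum>i\<in>UNIV. \<Sum>j\<in>UNIV. pd a (\<lambda>y. N $ i $ j * F y $ i $ j) x)"
      using d unfolding mdiff_def by (intro sum.cong refl pd_sum) (auto intro!: differentiable_mult)
    also have "\<dots> = (\<Sum>i\<in>UNIV. \<Sum>j\<in>UNIV. N $ i $ j * pd a (\<lambda>y. F y $ i $ j) x)"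
      using d unfolding mdiff_def by (intro sum.cong refl) (simp add: pd_mult pd_const)
    finally have "(\<Sum>i\<in>UNIV. \<Sum>j\<in>UNIV. N $ i $ j * pd a (\<lambda>y. F y $ i $ j) x) = 0" using 1 by simp
    then show "N \<bullet> mpd a F x = 0"
      by (simp add: inner_vec_def mpd_def mult.commute)
  qed
  then show ?thesis using orthogonal_comp_self[OF h] by simp
qed

lemma gauge_algebra:
  fixes A0 Ga Gb Qa Qb dQba dQab dGba dGab a1 b1 :: "real^3^3"
  assumes h1: "a1 = A0 ** Qa - Ga ** A0" and h2: "b1 = A0 ** Qb - Gb ** A0"
    and h3: "b1 ** Qa + A0 ** dQba - (dGba ** A0 + Ga ** b1) = a1 ** Qb + A0 ** dQab - (dGab ** A0 + Gb ** a1)"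
  shows "A0 ** (dQba - dQab + Qb ** Qa - Qa ** Qb) = (dGba - dGab + Gb ** Ga - Ga ** Gb) ** A0"
proof -
  note d = matrix_add_ldistrib matrix_sub_ldistrib matrix_add_rdistrib matrix_sub_rdistrib matrix_mul_assoc
  have "b1 ** Qa + A0 ** dQba - (dGba ** A0 + Ga ** b1) - (a1 ** Qb + A0 ** dQab - (dGab ** A0 + Gb ** a1)) = 0"
    using h3 by simp
  then have "A0 ** (dQba - dQab + Qb ** Qa - Qa ** Qb) - (dGba - dGab + Gb ** Ga - Ga ** Gb) ** A0 = 0"
    unfolding h1 h2 by (simp add: d algebra_simps)
  then show ?thesis by simp
qed

lemma inv_unique:
  fixes A B :: "real^3^3"
  assumes "B ** A = mat 1"
  shows "matrix_inv A = B"
proof -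
  have inv: "invertible A" using assms invertible_left_inverse by blast
  then have "\<exists>A'. A ** A' = mat 1 \<and> A' ** A = mat 1" unfolding invertible_def by blast
  then have M: "A ** matrix_inv A = mat 1 \<and> matrix_inv A ** A = mat 1"
    unfolding matrix_inv_def by (rule someI_ex)
  have "B = B ** (A ** matrix_inv A)" using M by simp
  also have "\<dots> = matrix_inv A" by (simp add: matrix_mul_assoc assms)
  finally show ?thesis by simp
qed

lemma inv_props:
  fixes A :: "real^3^3"
  assumes "invertible A"
  shows "A ** matrix_inv A = mat 1" "matrix_inv A ** A = mat 1"
proof -
  have "\<exists>A'. A ** A' = mat 1 \<and> A' ** A = mat 1" using assms unfolding invertible_def by blast
  then have M: "A ** matrix_inv A = mat 1 \<and> matrix_inv A ** A = mat 1"
    unfolding matrix_inv_def by (rule someI_ex)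
  then show "A ** matrix_inv A = mat 1" "matrix_inv A ** A = mat 1" by auto
qed

definition ssq :: "real^3^3 \<Rightarrow> real" where
  "ssq A = (\<Sum>k\<in>UNIV. (A $ k $ 1)^2)"

lemma CO3_facts:
  assumes "A \<in> CO3"
  shows "ssq A > 0" "matrix_inv A = (1 / ssq A) *\<^sub>R transpose A" "transpose A ** A = ssq A *\<^sub>R mat 1"
    "A ** matrix_inv A = mat 1" "matrix_inv A ** A = mat 1"
proof -
  obtain l R where lR: "l > 0" "orthogonal_matrix R" "A = l *\<^sub>R R"
    using assms unfolding CO3_def by blast
  have RR: "transpose R ** R = mat 1" using lR(2) orthogonal_matrix by blast
  have tA: "transpose A ** A = (l^2) *\<^sub>R mat 1"
    using RR by (simp add: lR(3) transpose_scalar matrix_scalar_ac scalar_matrix_assoc[symmetric] power2_eq_square)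
  have "ssq A = (transpose A ** A) $ 1 $ 1"
    by (simp add: ssq_def matrix_matrix_mult_def transpose_def power2_eq_square)
  also have "\<dots> = l^2" using tA by (simp add: mat_def)
  finally have s: "ssq A = l^2" .
  then show "ssq A > 0" using lR by simp
  show tA': "transpose A ** A = ssq A *\<^sub>R mat 1" using tA s by simp
  have "((1 / ssq A) *\<^sub>R transpose A) ** A = mat 1"
    using tA' \<open>ssq A > 0\<close> by (simp add: scalar_matrix_assoc[symmetric])
  then show inv: "matrix_inv A = (1 / ssq A) *\<^sub>R transpose A" by (rule inv_unique)
  have "invertible A" using \<open>((1 / ssq A) *\<^sub>R transpose A) ** A = mat 1\<close> invertible_left_inverse by blast
  then show "A ** matrix_inv A = mat 1" "matrix_inv A ** A = mat 1" by (rule inv_props)+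
qed

lemma gauge_curv:
  fixes \<Gamma> :: "real^3 \<Rightarrow> 3 \<Rightarrow> real^3^3" and A :: "real^3 \<Rightarrow> real^3^3"
  assumes V: "open V" "p \<in> V"
    and Gs: "\<forall>a i j. smooth_on V (\<lambda>x. \<Gamma> x a $ i $ j)"
    and As: "\<forall>i j. smooth_on V (\<lambda>x. A x $ i $ j)"
    and AC: "\<forall>x\<in>V. A x \<in> CO3"
    and Ah: "\<forall>x\<in>V. \<forall>a. matrix_inv (A x) ** \<Gamma> x a ** A x
              + matrix_inv (A x) ** (\<chi> i j. pd a (\<lambda>y. A y $ i $ j) x) \<in> h"
    and h: "subspace h" "\<forall>X\<in>h. \<forall>Y\<in>h. X ** Y - Y ** X \<in> h"
  shows "\<exists>M\<in>h. A p ** M = (\<chi> i j. curv \<Gamma> p i j b a) ** A p"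
proof -
  define Gp where "Gp a y = matrix_inv (A y) ** \<Gamma> y a ** A y + matrix_inv (A y) ** mpd a A y" for a y
  have Gph: "Gp a y \<in> h" if "y \<in> V" for a y
    using Ah that unfolding Gp_def mpd_def by blast
  have dA: "(\<lambda>y. mpd a A y $ i $ j) = pd a (\<lambda>y. A y $ i $ j)" for a i j
    by (simp add: mpd_def)
  have mA: "mdiff A p" using As V smooth_diff_at unfolding mdiff_def by blast
  have mdA: "mdiff (mpd a A) p" for a
    using As V smooth_diff_at smooth_pd unfolding mdiff_def dA by blast
  have mG: "mdiff (\<lambda>y. \<Gamma> y a) p" for a
    using Gs V smooth_diff_at unfolding mdiff_def by blast
  have mI: "mdiff (\<lambda>y. matrix_inv (A y)) p"
  proof (rule mdiff_local[OF V, of "\<lambda>y. (1 / ssq (A y)) *\<^sub>R transpose (A y)"])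
    show "(1 / ssq (A y)) *\<^sub>R transpose (A y) = matrix_inv (A y)" if "y \<in> V" for y
      using CO3_facts(2)[of "A y"] AC that by simp
    have sp: "ssq (A p) \<noteq> 0" using CO3_facts(1)[of "A p"] AC V by simp
    have ds: "(\<lambda>y. ssq (A y)) differentiable (at p)"
      unfolding ssq_def using mA unfolding mdiff_def by (auto intro!: differentiable_sum differentiable_power)
    show "mdiff (\<lambda>y. (1 / ssq (A y)) *\<^sub>R transpose (A y)) p"
      unfolding mdiff_def
    proof (intro allI)
      fix i j
      have "(\<lambda>y. A y $ j $ i / ssq (A y)) differentiable (at p)"
        using mA ds sp unfolding mdiff_def by (auto intro!: differentiable_divide)
      then show "(\<lambda>y. ((1 / ssq (A y)) *\<^sub>R transpose (A y)) $ i $ j) differentiable (at p)"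
        by (simp add: transpose_def)
    qed
  qed
  have mGp: "mdiff (Gp a) p" for a
  proof -
    have "mdiff (\<lambda>y. matrix_inv (A y) ** \<Gamma> y a ** A y + matrix_inv (A y) ** mpd a A y) p"
      by (intro mdiff_add mdiff_mult mI mG mA mdA)
    then show ?thesis unfolding Gp_def by (simp add: fun_eq_iff)
  qed
  have G2: "mpd a A y = A y ** Gp a y - \<Gamma> y a ** A y" if "y \<in> V" for a y
  proof -
    have AI: "A y ** matrix_inv (A y) = mat 1" using CO3_facts(4) AC that by blast
    have "A y ** Gp a y = (A y ** matrix_inv (A y)) ** \<Gamma> y a ** A y + (A y ** matrix_inv (A y)) ** mpd a A y"
      unfolding Gp_def by (simp add: matrix_add_ldistrib matrix_mul_assoc)
    then show ?thesis using AI by simp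
  qed
  have schw: "mpd b (mpd a A) p = mpd a (mpd b A) p" for a b
  proof -
    have "pd b (pd a (\<lambda>y. A y $ i $ j)) p = pd a (pd b (\<lambda>y. A y $ i $ j)) p" for i j
      using schwarz_smooth As V by blast
    then show ?thesis unfolding mpd_def[of b "mpd a A"] mpd_def[of a "mpd b A"] dA by simp
  qed
  have expand: "mpd b (mpd a A) p = mpd b A p ** Gp a p + A p ** mpd b (Gp a) p
      - (mpd b (\<lambda>y. \<Gamma> y a) p ** A p + \<Gamma> p a ** mpd b A p)" for a b
  proof -
    have "mpd b (mpd a A) p = mpd b (\<lambda>y. A y ** Gp a y - \<Gamma> y a ** A y) p"
      using G2 by (intro mpd_local[OF V]) auto
    also have "\<dots> = mpd b (\<lambda>y. A y ** Gp a y) p - mpd b (\<lambda>y. \<Gamma> y a ** A y) p"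
      by (intro mpd_diff mdiff_mult mA mGp mG)
    also have "\<dots> = mpd b A p ** Gp a p + A p ** mpd b (Gp a) p
      - (mpd b (\<lambda>y. \<Gamma> y a) p ** A p + \<Gamma> p a ** mpd b A p)"
      using mpd_mult[OF mA mGp, of b a] mpd_mult[OF mG mA, of b a] by simp
    finally show ?thesis .
  qed
  define M where "M = mpd b (Gp a) p - mpd a (Gp b) p + Gp b p ** Gp a p - Gp a p ** Gp b p"
  have Mh: "M \<in> h"
  proof -
    have 1: "mpd b (Gp a) p \<in> h" "mpd a (Gp b) p \<in> h"
      using mpd_in_subspace[OF h(1) V Gph mGp] by auto
    have 2: "Gp b p ** Gp a p - Gp a p ** Gp b p \<in> h" using h(2) Gph V by blast
    have "mpd b (Gp a) p - mpd a (Gp b) p \<in> h" using 1 h(1) subspace_diff by blast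
    then have "mpd b (Gp a) p - mpd a (Gp b) p + (Gp b p ** Gp a p - Gp a p ** Gp b p) \<in> h"
      using 2 h(1) subspace_add by blast
    then show ?thesis unfolding M_def by (simp add: algebra_simps)
  qed
  have cm: "(\<chi> i j. curv \<Gamma> p i j b a) = mpd b (\<lambda>y. \<Gamma> y a) p - mpd a (\<lambda>y. \<Gamma> y b) p + \<Gamma> p b ** \<Gamma> p a - \<Gamma> p a ** \<Gamma> p b"
    by (simp add: curv_def mpd_def matrix_matrix_mult_def vec_eq_iff sum_subtractf)
  have "A p ** M = (mpd b (\<lambda>y. \<Gamma> y a) p - mpd a (\<lambda>y. \<Gamma> y b) p + \<Gamma> p b ** \<Gamma> p a - \<Gamma> p a ** \<Gamma> p b) ** A p"
    unfolding M_def
  proof (rule gauge_algebra)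
    show "mpd a A p = A p ** Gp a p - \<Gamma> p a ** A p" using G2 V by blast
    show "mpd b A p = A p ** Gp b p - \<Gamma> p b ** A p" using G2 V by blast
    show "mpd b A p ** Gp a p + A p ** mpd b (Gp a) p - (mpd b (\<lambda>y. \<Gamma> y a) p ** A p + \<Gamma> p a ** mpd b A p) =
      mpd a A p ** Gp b p + A p ** mpd a (Gp b) p - (mpd a (\<lambda>y. \<Gamma> y b) p ** A p + \<Gamma> p b ** mpd a A p)"
      using expand[of b a] expand[of a b] schw[of b a] by simp
  qed
  then show ?thesis using Mh cm by auto
qed

definition hat :: "real^3 \<Rightarrow> real^3^3" where
  "hat w = vector [vector [0, -(w$3), w$2], vector [w$3, 0, -(w$1)], vector [-(w$2), w$1, 0]]"

lemma hat_entries: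
  "hat w $ 1 $ 1 = 0" "hat w $ 1 $ 2 = -(w$3)" "hat w $ 1 $ 3 = w$2"
  "hat w $ 2 $ 1 = w$3" "hat w $ 2 $ 2 = 0" "hat w $ 2 $ 3 = -(w$1)"
  "hat w $ 3 $ 1 = -(w$2)" "hat w $ 3 $ 2 = w$1" "hat w $ 3 $ 3 = 0"
  by (simp_all add: hat_def)

lemma mat_entries: "(mat c :: real^3^3) $ i $ j = (if i = j then c else 0)"
  by (simp add: mat_def)

lemma vec33_eq: "(M::real^3^3) = N \<longleftrightarrow> (\<forall>i j. M $ i $ j = N $ i $ j)"
  by (simp add: vec_eq_iff)

lemma co3_decomp:
  assumes "M \<in> co3"
  shows "M = mat (M$1$1) + hat (vector [M$3$2, M$1$3, M$2$1])"
proof -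
  obtain c where c: "\<forall>i j. M $ i $ j + M $ j $ i = 2 * c * kd i j" using assms unfolding co3_def by blast
  have d: "M $ i $ i = c" for i using c[rule_format, of i i] by (simp add: kd_def)
  have o: "M $ i $ j = - M $ j $ i" if "i \<noteq> j" for i j using c[rule_format, of i j] that by (simp add: kd_def)
  show ?thesis unfolding vec33_eq forall_3
    using d o[of 1 2] o[of 1 3] o[of 2 3] o[of 2 1] o[of 3 1] o[of 3 2]
    by (simp add: hat_entries mat_entries)
qed

lemma hat_co3: "mat c + hat w \<in> co3"
  unfolding co3_def mem_Collect_eq
  by (rule exI[of _ c]) (simp add: forall_3 hat_entries mat_entries kd_def)

lemma bracket_hat:
  "(mat c + hat u) ** (mat d + hat v) - (mat d + hat v) ** (mat c + hat u) = hat (cross3 u v)"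
  unfolding vec33_eq forall_3
  by (simp add: matrix_matrix_mult_def sum_3 hat_entries mat_entries cross3_simps)

lemma hat_add: "hat (u + v) = hat u + hat v"
  unfolding vec33_eq forall_3 by (simp add: hat_entries)

lemma hat_scale: "hat (c *\<^sub>R u) = c *\<^sub>R hat u"
  unfolding vec33_eq forall_3 by (simp add: hat_entries)

lemma hat_zero_iff: "hat u = 0 \<longleftrightarrow> u = 0"
  unfolding vec33_eq forall_3 by (auto simp add: hat_entries vec_eq_iff forall_3)

lemma co3_entries:
  assumes "M \<in> co3"
  shows "M $ 2 $ 2 = M $ 1 $ 1" "M $ 3 $ 3 = M $ 1 $ 1" "M $ 2 $ 3 = - M $ 3 $ 2"
    "M $ 3 $ 1 = - M $ 1 $ 3" "M $ 1 $ 2 = - M $ 2 $ 1"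
proof -
  obtain c where c: "\<forall>i j. M $ i $ j + M $ j $ i = 2 * c * kd i j" using assms unfolding co3_def by blast
  have d: "M $ i $ i = c" for i using c[rule_format, of i i] by (simp add: kd_def)
  have o: "M $ i $ j = - M $ j $ i" if "i \<noteq> j" for i j using c[rule_format, of i j] that by (simp add: kd_def)
  show "M $ 2 $ 2 = M $ 1 $ 1" "M $ 3 $ 3 = M $ 1 $ 1" using d by auto
  show "M $ 2 $ 3 = - M $ 3 $ 2" using o[of 2 3] by simp
  show "M $ 3 $ 1 = - M $ 1 $ 3" using o[of 3 1] by simp
  show "M $ 1 $ 2 = - M $ 2 $ 1" using o[of 1 2] by simp
qed

lemma ew_alg:
  fixes \<Phi> :: "3 \<Rightarrow> 3 \<Rightarrow> real^3^3"
  assumes anti: "\<And>k l. \<Phi> k l = - \<Phi> l k"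
    and co: "\<And>k l. \<Phi> k l \<in> co3"
    and ew: "\<And>i j. ((\<Sum>k\<in>UNIV. \<Phi> k j $ k $ i) + (\<Sum>k\<in>UNIV. \<Phi> k i $ k $ j)) / 2
                - (\<Sum>i'\<in>UNIV. \<Sum>k\<in>UNIV. \<Phi> k i' $ k $ i') / 3 * kd i j = 0"
    and comm: "\<And>k l m n. \<Phi> k l ** \<Phi> m n = \<Phi> m n ** \<Phi> k l"
  shows "\<Phi> k l $ i $ j = 0 \<or> i = j"
proof -
  have kk: "\<Phi> k k = 0" for k
  proof -
    have "\<Phi> k k $ i $ j = 0" for i j
    proof -
      have "\<Phi> k k $ i $ j = (- \<Phi> k k) $ i $ j" using anti[of k k] by (rule arg_cong[where f="\<lambda>M. M $ i $ j"])
      also have "\<dots> = - (\<Phi> k k $ i $ j)" by simp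
      finally show ?thesis by linarith
    qed
    then show ?thesis by (simp add: vec_eq_iff)
  qed
  have fl: "\<Phi> 3 2 = - \<Phi> 2 3" "\<Phi> 1 3 = - \<Phi> 3 1" "\<Phi> 2 1 = - \<Phi> 1 2" by (rule anti)+
  note c1 = co3_entries[OF co[of 2 3]] and c2 = co3_entries[OF co[of 3 1]] and c3 = co3_entries[OF co[of 1 2]]
  note S = kk fl c1 c2 c3 sum_3 kd_def
  have L: "2 * \<Phi> 3 1 $ 1 $ 3 + (2 * \<Phi> 1 2 $ 2 $ 1 - 4 * \<Phi> 2 3 $ 3 $ 2) = 0"
      "2 * \<Phi> 2 3 $ 3 $ 2 + (2 * \<Phi> 1 2 $ 2 $ 1 - 4 * \<Phi> 3 1 $ 1 $ 3) = 0"
      "\<Phi> 3 1 $ 3 $ 2 + \<Phi> 2 3 $ 1 $ 3 = 0" "\<Phi> 1 2 $ 3 $ 2 + \<Phi> 2 3 $ 2 $ 1 = 0"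
      "\<Phi> 1 2 $ 1 $ 3 + \<Phi> 3 1 $ 2 $ 1 = 0"
    using ew[of 1 1] ew[of 2 2] ew[of 3 3] ew[of 1 2] ew[of 1 3] ew[of 2 3] by (simp_all add: S)
  have Q: "\<Phi> 2 3 $ 3 $ 2 * \<Phi> 3 1 $ 1 $ 3 = \<Phi> 3 1 $ 3 $ 2 * \<Phi> 2 3 $ 1 $ 3"
     "\<Phi> 3 1 $ 1 $ 3 * \<Phi> 1 2 $ 2 $ 1 = \<Phi> 1 2 $ 1 $ 3 * \<Phi> 3 1 $ 2 $ 1"
     "\<Phi> 1 2 $ 2 $ 1 * \<Phi> 2 3 $ 3 $ 2 = \<Phi> 2 3 $ 2 $ 1 * \<Phi> 1 2 $ 3 $ 2"
    using arg_cong[OF comm[of 2 3 3 1], of "\<lambda>M. M $ 2 $ 1"]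
     arg_cong[OF comm[of 3 1 1 2], of "\<lambda>M. M $ 3 $ 2"]
     arg_cong[OF comm[of 1 2 2 3], of "\<lambda>M. M $ 1 $ 3"]
    by (simp_all add: S matrix_matrix_mult_def)
  define t where "t = \<Phi> 2 3 $ 3 $ 2"
  have T: "\<Phi> 3 1 $ 1 $ 3 = t" "\<Phi> 1 2 $ 2 $ 1 = t" using L unfolding t_def by linarith+
  have O: "\<Phi> 3 1 $ 3 $ 2 = - \<Phi> 2 3 $ 1 $ 3" "\<Phi> 1 2 $ 3 $ 2 = - \<Phi> 2 3 $ 2 $ 1"
    "\<Phi> 1 2 $ 1 $ 3 = - \<Phi> 3 1 $ 2 $ 1" using L by linarith+
  have q1: "t^2 + (\<Phi> 2 3 $ 1 $ 3)^2 = 0" using Q(1) T O unfolding t_def by (simp add: power2_eq_square)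
  have q2: "t^2 + (\<Phi> 3 1 $ 2 $ 1)^2 = 0" using Q(2) T O unfolding t_def by (simp add: power2_eq_square)
  have q3: "t^2 + (\<Phi> 2 3 $ 2 $ 1)^2 = 0" using Q(3) T O unfolding t_def by (simp add: power2_eq_square)
  have t0: "t = 0" and a0: "\<Phi> 2 3 $ 1 $ 3 = 0" using q1 sum_power2_eq_zero_iff by blast+
  have c0: "\<Phi> 3 1 $ 2 $ 1 = 0" using q2 sum_power2_eq_zero_iff by blast
  have b0: "\<Phi> 2 3 $ 2 $ 1 = 0" using q3 sum_power2_eq_zero_iff by blast
  have Z: "\<Phi> 2 3 $ 3 $ 2 = 0" "\<Phi> 2 3 $ 1 $ 3 = 0" "\<Phi> 2 3 $ 2 $ 1 = 0"
    "\<Phi> 3 1 $ 3 $ 2 = 0" "\<Phi> 3 1 $ 1 $ 3 = 0" "\<Phi> 3 1 $ 2 $ 1 = 0"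
    "\<Phi> 1 2 $ 3 $ 2 = 0" "\<Phi> 1 2 $ 1 $ 3 = 0" "\<Phi> 1 2 $ 2 $ 1 = 0"
    using t0 a0 b0 c0 T O unfolding t_def by simp_all
  show ?thesis
    using exhaust_3[of k] exhaust_3[of l] exhaust_3[of i] exhaust_3[of j]
    by (auto simp: S Z)
qed

lemma cross_nz:
  fixes u n :: "real^3"
  assumes "u \<noteq> 0" "n \<noteq> 0" "u \<bullet> n = 0"
  shows "cross3 u n \<noteq> 0"
proof -
  have "(norm (cross3 u n))\<^sup>2 = (norm u)\<^sup>2 * (norm n)\<^sup>2 - (u \<bullet> n)\<^sup>2" by (rule norm_cross)
  then have "(norm (cross3 u n))\<^sup>2 = (norm u)\<^sup>2 * (norm n)\<^sup>2" using assms by simp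
  moreover have "(norm u)\<^sup>2 * (norm n)\<^sup>2 > 0" using assms by simp
  ultimately show ?thesis by auto
qed

lemma lie_commute:
  assumes S: "subspace S" "\<forall>X\<in>S. \<forall>Y\<in>S. X ** Y - Y ** X \<in> S" "S \<subseteq> co3" "S \<noteq> co3"
    and XYZ: "X \<in> S" "Y \<in> S" "Z \<in> S" "Z $ 1 $ 1 \<noteq> 0"
  shows "X ** Y = Y ** X"
proof (rule ccontr)
  assume ne: "X ** Y \<noteq> Y ** X"
  define u :: "real^3" where "u = vector [X$3$2, X$1$3, X$2$1]"
  define v :: "real^3" where "v = vector [Y$3$2, Y$1$3, Y$2$1]"
  define \<zeta> :: "real^3" where "\<zeta> = vector [Z$3$2, Z$1$3, Z$2$1]"
  have Xd: "X = mat (X$1$1) + hat u" using co3_decomp XYZ S unfolding u_def by blast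
  have Yd: "Y = mat (Y$1$1) + hat v" using co3_decomp XYZ S unfolding v_def by blast
  have Zd: "Z = mat (Z$1$1) + hat \<zeta>" using co3_decomp XYZ S unfolding \<zeta>_def by blast
  define n where "n = cross3 u v"
  have hn: "hat n = X ** Y - Y ** X" unfolding n_def
    using bracket_hat[of "X$1$1" u "Y$1$1" v] by (simp only: Xd[symmetric] Yd[symmetric])
  then have nS: "hat n \<in> S" using S XYZ by auto
  have n0: "n \<noteq> 0" using ne hn by (auto simp: hat_zero_iff[symmetric])
  have u0: "u \<noteq> 0" using n0 unfolding n_def by auto
  have un: "u \<bullet> n = 0" unfolding n_def by (rule dot_cross_self)
  define m where "m = cross3 u n"
  have hm: "hat m = X ** hat n - hat n ** X"
    using bracket_hat[of "X$1$1" u 0 n] unfolding m_def by (simp only: Xd[symmetric] mat_0 add_0)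
  then have mS: "hat m \<in> S" using S XYZ nS by auto
  have m0: "m \<noteq> 0" unfolding m_def using cross_nz u0 n0 un by blast
  have nm: "n \<bullet> m = 0" unfolding m_def by (rule dot_cross_self)
  define q where "q = cross3 n m"
  have hq: "hat q = hat n ** hat m - hat m ** hat n"
    using bracket_hat[of 0 n 0 m] unfolding q_def by simp
  then have qS: "hat q \<in> S" using S nS mS by auto
  have q0: "q \<noteq> 0" unfolding q_def using cross_nz n0 m0 nm by blast
  have nq: "n \<bullet> q = 0" unfolding q_def by (rule dot_cross_self)
  have mq: "m \<bullet> q = 0" unfolding q_def by (rule dot_cross_self)
  define L where "L = {w. hat w \<in> S}"
  have subL: "subspace L"
    unfolding subspace_def L_def using S(1)
    by (auto simp: hat_add hat_scale subspace_add subspace_mul subspace_0 hat_zero_iff[of 0, simplified])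
  have BL: "{n, m, q} \<subseteq> L" using nS mS qS unfolding L_def by auto
  have nmq: "n \<noteq> m" "n \<noteq> q" "m \<noteq> q" using nm nq mq n0 m0 by auto
  have ind: "independent {n, m, q}"
    by (rule pairwise_orthogonal_independent)
       (use nm nq mq n0 m0 q0 in \<open>auto simp: pairwise_def orthogonal_def inner_commute\<close>)
  have card: "card {n, m, q} = 3" using nmq by simp
  have "(UNIV :: (real^3) set) \<subseteq> span {n, m, q}"
    by (rule card_ge_dim_independent[OF _ ind]) (use card in simp_all)
  also have "\<dots> \<subseteq> L" using span_minimal[OF BL subL] .
  finally have allL: "hat w \<in> S" for w unfolding L_def by auto
  have "mat (Z$1$1) = Z - hat \<zeta>" using Zd by (simp add: algebra_simps)
  then have "mat (Z$1$1) \<in> S" using S(1) XYZ allL subspace_diff by metis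
  then have "(1 / Z$1$1) *\<^sub>R mat (Z$1$1) \<in> S" using S(1) subspace_scale by blast
  moreover have "(1 / Z$1$1) *\<^sub>R mat (Z$1$1) = (mat 1 :: real^3^3)"
    using XYZ(4) by (simp add: vec_eq_iff mat_def)
  ultimately have I: "mat 1 \<in> S" by simp
  have "co3 \<subseteq> S"
  proof
    fix M assume "M \<in> co3"
    then have "M = mat (M$1$1) + hat (vector [M$3$2, M$1$3, M$2$1])" by (rule co3_decomp)
    moreover have "mat (M$1$1) = (M$1$1) *\<^sub>R (mat 1 :: real^3^3)" by (simp add: vec_eq_iff mat_def)
    ultimately show "M \<in> S" using I allL S(1) subspace_add subspace_scale by metis
  qed
  then show False using S by blast
qed

lemma co3_mat_iff: "M \<in> co3 \<longleftrightarrow> (\<exists>c. M + transpose M = (2 * c) *\<^sub>R mat 1)"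
  unfolding co3_def by (simp add: vec_eq_iff transpose_def mat_def kd_def)

lemma conj_props:
  fixes A :: "real^3^3"
  assumes AC: "A \<in> CO3" and h: "lie_subalgebra h" "h \<subseteq> co3" "h \<noteq> co3"
  defines "S \<equiv> (\<lambda>M. A ** M ** matrix_inv A) ` h"
  shows "subspace S" "\<forall>X\<in>S. \<forall>Y\<in>S. X ** Y - Y ** X \<in> S" "S \<subseteq> co3" "S \<noteq> co3"
proof -
  note F = CO3_facts[OF AC]
  define B where "B = matrix_inv A"
  have BA: "B ** A = mat 1" and AB: "A ** B = mat 1" using F unfolding B_def by auto
  have lin: "linear (\<lambda>M. A ** M ** B)"
    by (rule linearI) (simp_all add: matrix_add_ldistrib matrix_add_rdistrib matrix_scalar_ac scalar_matrix_assoc)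
  have hs: "subspace h" using h(1) unfolding lie_subalgebra_def by blast
  have hb: "\<forall>X\<in>h. \<forall>Y\<in>h. X ** Y - Y ** X \<in> h" using h(1) unfolding lie_subalgebra_def by blast
  show "subspace S" unfolding S_def B_def[symmetric] by (rule linear_subspace_image[OF lin hs])
  have conj_mult: "(A ** X ** B) ** (A ** Y ** B) = A ** (X ** Y) ** B" for X Y
  proof -
    have "(A ** X ** B) ** (A ** Y ** B) = A ** X ** (B ** A) ** Y ** B" by (simp add: matrix_mul_assoc)
    also have "\<dots> = A ** (X ** Y) ** B" using BA by (simp add: matrix_mul_assoc)
    finally show ?thesis .
  qed
  show "\<forall>X\<in>S. \<forall>Y\<in>S. X ** Y - Y ** X \<in> S"
  proof (intro ballI)
    fix X Y assume "X \<in> S" "Y \<in> S"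
    then obtain X' Y' where X': "X' \<in> h" "X = A ** X' ** B" and Y': "Y' \<in> h" "Y = A ** Y' ** B"
      unfolding S_def B_def by blast
    have "X ** Y - Y ** X = A ** (X' ** Y' - Y' ** X') ** B"
      unfolding X' Y' conj_mult by (simp add: matrix_sub_ldistrib matrix_sub_rdistrib)
    then show "X ** Y - Y ** X \<in> S" using hb X' Y' unfolding S_def B_def by blast
  qed
  have cc: "A ** M ** B \<in> co3" if Mc: "M \<in> co3" for M
  proof -
    obtain c where c: "M + transpose M = (2 * c) *\<^sub>R mat 1" using Mc unfolding co3_mat_iff by blast
    define s where "s = ssq A"
    have s0: "s \<noteq> 0" using F(1) unfolding s_def by simp
    have Bd: "B = (1 / s) *\<^sub>R transpose A" using F(2) unfolding B_def s_def by simp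
    have tB: "transpose B = (1 / s) *\<^sub>R A" unfolding Bd by (simp add: transpose_scalar)
    have "A ** transpose A = A ** (s *\<^sub>R B)" using s0 unfolding Bd by simp
    also have "\<dots> = s *\<^sub>R (A ** B)" by (simp add: matrix_scalar_ac scalar_matrix_assoc[symmetric])
    finally have AAt: "A ** transpose A = s *\<^sub>R mat 1" using AB by simp
    have e1: "A ** M ** B = (1 / s) *\<^sub>R (A ** M ** transpose A)"
      unfolding Bd by (simp add: matrix_scalar_ac scalar_matrix_assoc[symmetric])
    have "transpose (A ** M ** B) = (1 / s) *\<^sub>R transpose (A ** M ** transpose A)"
      unfolding e1 by (simp add: transpose_scalar)
    also have "transpose (A ** M ** transpose A) = A ** transpose M ** transpose A"
      by (simp add: matrix_transpose_mul matrix_mul_assoc)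
    finally have e2: "transpose (A ** M ** B) = (1 / s) *\<^sub>R (A ** transpose M ** transpose A)" .
    have "A ** M ** B + transpose (A ** M ** B) = (1 / s) *\<^sub>R (A ** (M + transpose M) ** transpose A)"
      unfolding e2 unfolding e1 by (simp add: matrix_add_ldistrib matrix_add_rdistrib scaleR_add_right)
    also have "\<dots> = (1 / s) *\<^sub>R ((2 * c) *\<^sub>R (A ** transpose A))"
      unfolding c by (simp add: matrix_scalar_ac scalar_matrix_assoc[symmetric])
    also have "\<dots> = (2 * c) *\<^sub>R mat 1"
      unfolding AAt using s0 by simp
    finally show ?thesis unfolding co3_mat_iff by blast
  qed
  show "S \<subseteq> co3" unfolding S_def B_def[symmetric] using cc h(2) by blast
  show "S \<noteq> co3"
  proof
    assume Sc: "S = co3"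
    have "co3 \<subseteq> h"
    proof
      fix K assume K: "K \<in> co3"
      then have "A ** K ** B \<in> S" using cc Sc by blast
      then obtain M where M: "M \<in> h" "A ** K ** B = A ** M ** B" unfolding S_def B_def by blast
      have r: "B ** (A ** X ** B) ** A = (B ** A) ** X ** (B ** A)" for X by (simp add: matrix_mul_assoc)
      have "K = B ** (A ** K ** B) ** A" unfolding r BA by simp
      also have "\<dots> = B ** (A ** M ** B) ** A" using M by simp
      also have "\<dots> = M" unfolding r BA by simp
      finally show "K \<in> h" using M by simp
    qed
    then show False using h by blast
  qed
qed

lemma bianchi_alg:
  fixes e :: "3 \<Rightarrow> 3 \<Rightarrow> real" and dE G :: "3 \<Rightarrow> 3 \<Rightarrow> 3 \<Rightarrow> real"
    and dG ddE :: "3 \<Rightarrow> 3 \<Rightarrow> 3 \<Rightarrow> 3 \<Rightarrow> real"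
  assumes T: "\<And>a b i. dE a i b - dE b i a + (\<Sum>j\<in>UNIV. G a i j * e j b - G b i j * e j a) = 0"
    and DT: "\<And>c a b i. ddE c a i b - ddE c b i a + (\<Sum>j\<in>UNIV. dG c a i j * e j b + G a i j * dE c j b
                 - dG c b i j * e j a - G b i j * dE c j a) = 0"
    and SW: "\<And>c a i b. ddE c a i b = ddE a c i b"
  defines "Om \<equiv> \<lambda>x y i k. dG x y i k - dG y x i k + (\<Sum>j\<in>UNIV. G x i j * G y j k - G y i j * G x j k)"
  shows "(\<Sum>k\<in>UNIV. Om c a i k * e k b) + (\<Sum>k\<in>UNIV. Om a b i k * e k c) + (\<Sum>k\<in>UNIV. Om b c i k * e k a) = 0"
proof -
  define Tx where "Tx a b j = dE a j b - dE b j a + (\<Sum>k\<in>UNIV. G a j k * e k b - G b j k * e k a)" for a b j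
  define Dx where "Dx c a b = ddE c a i b - ddE c b i a + (\<Sum>j\<in>UNIV. dG c a i j * e j b + G a i j * dE c j b
                 - dG c b i j * e j a - G b i j * dE c j a)" for c a b
  have id: "(\<Sum>k\<in>UNIV. Om c a i k * e k b) + (\<Sum>k\<in>UNIV. Om a b i k * e k c) + (\<Sum>k\<in>UNIV. Om b c i k * e k a)
    = Dx c a b + Dx a b c + Dx b c a
      - (\<Sum>j\<in>UNIV. G a i j * Tx c b j + G b i j * Tx a c j + G c i j * Tx b a j)
      + (ddE a c i b - ddE c a i b) + (ddE b a i c - ddE a b i c) + (ddE c b i a - ddE b c i a)"
    unfolding Om_def Tx_def Dx_def sum_3 by algebra
  have "Tx a b j = 0" for a b j unfolding Tx_def using T .
  moreover have "Dx c a b = 0" for c a b unfolding Dx_def using DT .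
  ultimately show ?thesis unfolding id using SW by simp
qed

lemma bianchi_at:
  fixes e :: "real^3 \<Rightarrow> real^3^3" and \<Gamma> :: "real^3 \<Rightarrow> 3 \<Rightarrow> real^3^3"
  assumes U: "open U" "p \<in> U"
    and Es: "\<forall>i a. smooth_on U (\<lambda>x. e x $ i $ a)"
    and Gs: "\<forall>a i j. smooth_on U (\<lambda>x. \<Gamma> x a $ i $ j)"
    and tor: "\<forall>x\<in>U. \<forall>i a b. pd a (\<lambda>y. e y $ i $ b) x - pd b (\<lambda>y. e y $ i $ a) x
        + (\<Sum>j\<in>UNIV. \<Gamma> x a $ i $ j * e x $ j $ b - \<Gamma> x b $ i $ j * e x $ j $ a) = 0"
  shows "(\<Sum>k\<in>UNIV. curv \<Gamma> p i k c a * e p $ k $ b) + (\<Sum>k\<in>UNIV. curv \<Gamma> p i k a b * e p $ k $ c)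
       + (\<Sum>k\<in>UNIV. curv \<Gamma> p i k b c * e p $ k $ a) = 0"
proof -
  have dE: "(\<lambda>y. e y $ i $ b) differentiable (at p)" for i b using Es U smooth_diff_at by blast
  have ddE: "pd a (\<lambda>y. e y $ i $ b) differentiable (at p)" for a i b using Es U smooth_diff_at smooth_pd by blast
  have dG: "(\<lambda>y. \<Gamma> y a $ i $ j) differentiable (at p)" for a i j using Gs U smooth_diff_at by blast
  have DT: "pd c (pd a (\<lambda>y. e y $ i $ b)) p - pd c (pd b (\<lambda>y. e y $ i $ a)) p
     + (\<Sum>j\<in>UNIV. pd c (\<lambda>y. \<Gamma> y a $ i $ j) p * e p $ j $ b + \<Gamma> p a $ i $ j * pd c (\<lambda>y. e y $ j $ b) p
        - pd c (\<lambda>y. \<Gamma> y b $ i $ j) p * e p $ j $ a - \<Gamma> p b $ i $ j * pd c (\<lambda>y. e y $ j $ a) p) = 0"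
    for c a b i
  proof -
    define F3 where "F3 y = (\<Sum>j\<in>UNIV. \<Gamma> y a $ i $ j * e y $ j $ b - \<Gamma> y b $ i $ j * e y $ j $ a)" for y
    have d3: "F3 differentiable (at p)" unfolding F3_def using dE dG by (auto intro!: differentiable_sum differentiable_diff differentiable_mult)
    have d12: "(\<lambda>y. pd a (\<lambda>y. e y $ i $ b) y - pd b (\<lambda>y. e y $ i $ a) y) differentiable (at p)"
      using ddE by (auto intro!: differentiable_diff)
    have "pd c (\<lambda>y. (pd a (\<lambda>y. e y $ i $ b) y - pd b (\<lambda>y. e y $ i $ a) y) + F3 y) p = pd c (\<lambda>y. 0) p"
      using tor by (intro pd_local[OF U]) (auto simp: F3_def)
    then have 0: "pd c (\<lambda>y. (pd a (\<lambda>y. e y $ i $ b) y - pd b (\<lambda>y. e y $ i $ a) y) + F3 y) p = 0"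
      by (simp add: pd_const)
    have "pd c (\<lambda>y. (pd a (\<lambda>y. e y $ i $ b) y - pd b (\<lambda>y. e y $ i $ a) y) + F3 y) p
       = pd c (\<lambda>y. pd a (\<lambda>y. e y $ i $ b) y - pd b (\<lambda>y. e y $ i $ a) y) p + pd c F3 p"
      by (rule pd_add[OF d12 d3])
    also have "pd c (\<lambda>y. pd a (\<lambda>y. e y $ i $ b) y - pd b (\<lambda>y. e y $ i $ a) y) p
        = pd c (pd a (\<lambda>y. e y $ i $ b)) p - pd c (pd b (\<lambda>y. e y $ i $ a)) p"
      using pd_diff[OF ddE ddE] by simp
    also have "pd c F3 p = (\<Sum>j\<in>UNIV. pd c (\<lambda>y. \<Gamma> y a $ i $ j * e y $ j $ b - \<Gamma> y b $ i $ j * e y $ j $ a) p)"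
      unfolding F3_def using dE dG by (intro pd_sum) (auto intro!: differentiable_diff differentiable_mult)
    also have "\<dots> = (\<Sum>j\<in>UNIV. pd c (\<lambda>y. \<Gamma> y a $ i $ j) p * e p $ j $ b + \<Gamma> p a $ i $ j * pd c (\<lambda>y. e y $ j $ b) p
        - pd c (\<lambda>y. \<Gamma> y b $ i $ j) p * e p $ j $ a - \<Gamma> p b $ i $ j * pd c (\<lambda>y. e y $ j $ a) p)"
    proof (rule sum.cong[OF refl])
      fix j
      have "pd c (\<lambda>y. \<Gamma> y a $ i $ j * e y $ j $ b - \<Gamma> y b $ i $ j * e y $ j $ a) p
        = pd c (\<lambda>y. \<Gamma> y a $ i $ j * e y $ j $ b) p - pd c (\<lambda>y. \<Gamma> y b $ i $ j * e y $ j $ a) p"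
        using dE dG by (intro pd_diff) (auto intro!: differentiable_mult)
      also have "\<dots> = pd c (\<lambda>y. \<Gamma> y a $ i $ j) p * e p $ j $ b + \<Gamma> p a $ i $ j * pd c (\<lambda>y. e y $ j $ b) p
        - (pd c (\<lambda>y. \<Gamma> y b $ i $ j) p * e p $ j $ a + \<Gamma> p b $ i $ j * pd c (\<lambda>y. e y $ j $ a) p)"
        using pd_mult[OF dG dE] by simp
      finally show "pd c (\<lambda>y. \<Gamma> y a $ i $ j * e y $ j $ b - \<Gamma> y b $ i $ j * e y $ j $ a) p
        = pd c (\<lambda>y. \<Gamma> y a $ i $ j) p * e p $ j $ b + \<Gamma> p a $ i $ j * pd c (\<lambda>y. e y $ j $ b) p
        - pd c (\<lambda>y. \<Gamma> y b $ i $ j) p * e p $ j $ a - \<Gamma> p b $ i $ j * pd c (\<lambda>y. e y $ j $ a) p"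
        by simp
    qed
    finally show ?thesis using 0 by simp
  qed
  have SW: "pd c (pd a (\<lambda>y. e y $ i $ b)) p = pd a (pd c (\<lambda>y. e y $ i $ b)) p" for c a i b
    using schwarz_smooth Es U by blast
  have T: "pd a (\<lambda>y. e y $ i $ b) p - pd b (\<lambda>y. e y $ i $ a) p
        + (\<Sum>j\<in>UNIV. \<Gamma> p a $ i $ j * e p $ j $ b - \<Gamma> p b $ i $ j * e p $ j $ a) = 0" for a b i
    using tor U by blast
  have cv: "curv \<Gamma> p i k x y = (\<lambda>x y i k. pd x (\<lambda>z. \<Gamma> z y $ i $ k) p - pd y (\<lambda>z. \<Gamma> z x $ i $ k) p
      + (\<Sum>j\<in>UNIV. \<Gamma> p x $ i $ j * \<Gamma> p y $ j $ k - \<Gamma> p y $ i $ j * \<Gamma> p x $ j $ k)) x y i k" for x y i k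
    by (simp add: curv_def)
  show ?thesis
    unfolding cv
    by (rule bianchi_alg[where e="\<lambda>j b. e p $ j $ b" and dE="\<lambda>c k b. pd c (\<lambda>y. e y $ k $ b) p"
        and G="\<lambda>a i j. \<Gamma> p a $ i $ j" and dG="\<lambda>c a i j. pd c (\<lambda>y. \<Gamma> y a $ i $ j) p"
        and ddE="\<lambda>c a i b. pd c (pd a (\<lambda>y. e y $ i $ b)) p", OF T DT SW])
qed

lemma frame_inv:
  fixes E Ei :: "real^3^3" and W :: "3 \<Rightarrow> 3 \<Rightarrow> real"
  assumes EE: "Ei ** E = mat 1"
  shows "(\<Sum>k\<in>UNIV. \<Sum>l\<in>UNIV. E$k$a * E$l$b * (\<Sum>a'\<in>UNIV. \<Sum>b'\<in>UNIV. W a' b' * Ei$a'$k * Ei$b'$l)) = W a b"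
proof -
  have "(\<Sum>k\<in>UNIV. \<Sum>l\<in>UNIV. E$k$a * E$l$b * (\<Sum>a'\<in>UNIV. \<Sum>b'\<in>UNIV. W a' b' * Ei$a'$k * Ei$b'$l))
     = (\<Sum>a'\<in>UNIV. \<Sum>b'\<in>UNIV. W a' b' * (\<Sum>k\<in>UNIV. Ei$a'$k * E$k$a) * (\<Sum>l\<in>UNIV. Ei$b'$l * E$l$b))"
    unfolding sum_3 by algebra
  also have "\<dots> = (\<Sum>a'\<in>UNIV. \<Sum>b'\<in>UNIV. (if a' = a then (if b' = b then W a' b' else 0) else 0))"
  proof -
    have d: "(\<Sum>k\<in>UNIV. Ei$x$k * E$k$y) = (if x = y then 1 else 0)" for x y
      using arg_cong[OF EE, of "\<lambda>M. M $ x $ y"] by (simp add: matrix_matrix_mult_def mat_def)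
    show ?thesis by (intro sum.cong refl) (simp add: d)
  qed
  also have "\<dots> = W a b"
  proof -
    have "(\<Sum>b'\<in>UNIV. (if a' = a then (if b' = b then W a' b' else 0) else 0)) = (if a' = a then W a' b else 0)" for a'
      by (cases "a' = a") simp_all
    then show ?thesis by simp
  qed
  finally show ?thesis .
qed

lemma curv_anti: "curv \<Gamma> x i j a b = - curv \<Gamma> x i j b a"
  unfolding curv_def by (simp add: sum_subtractf algebra_simps)

lemma curv_from_frame:
  assumes "matrix_inv (e x) ** e x = mat 1"
  shows "curv \<Gamma> x i j a b = (\<Sum>k\<in>UNIV. \<Sum>l\<in>UNIV. e x $ k $ a * e x $ l $ b * curvF e \<Gamma> x i j k l)"
  unfolding curvF_def using frame_inv[OF assms, of a b "\<lambda>a b. curv \<Gamma> x i j a b"] by simp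

lemma curvF_mat:
  "(\<chi> i j. curvF e \<Gamma> x i j k l) = (\<Sum>a\<in>UNIV. \<Sum>b\<in>UNIV.
      (matrix_inv (e x) $ a $ k * matrix_inv (e x) $ b $ l) *\<^sub>R (\<chi> i j. curv \<Gamma> x i j a b))"
  by (simp add: vec_eq_iff curvF_def sum_component mult_ac)

lemma trace_curv:
  assumes U: "open U" "p \<in> U" and W: "weyl_connection U e \<nu> \<Gamma>"
  shows "(\<Sum>i\<in>UNIV. curv \<Gamma> p i i a b) = 3 * (pd a (\<lambda>y. \<nu> y $ b) p - pd b (\<lambda>y. \<nu> y $ a) p)"
proof -
  have gn: "\<Gamma> y c $ i $ i = \<nu> y $ c" if "y \<in> U" for y c i
  proof -
    have "(\<Gamma> y c $ i $ i + \<Gamma> y c $ i $ i) / 2 = kd i i * \<nu> y $ c"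
      using W that unfolding weyl_connection_def by blast
    then show ?thesis by (simp add: kd_def)
  qed
  have pg: "pd d (\<lambda>y. \<Gamma> y c $ i $ i) p = pd d (\<lambda>y. \<nu> y $ c) p" for d c i
    using gn by (intro pd_local[OF U]) auto
  show ?thesis unfolding curv_def sum_3 pg by algebra
qed

theorem proposition1:
  fixes U :: "(real^3) set"
    and e :: "real^3 \<Rightarrow> real^3^3"
    and \<nu> :: "real^3 \<Rightarrow> real^3"
    and \<Gamma> :: "real^3 \<Rightarrow> 3 \<Rightarrow> real^3^3"
  assumes "open U"
    and "\<forall>i a. smooth_on U (\<lambda>x. e x $ i $ a)"
    and "\<forall>x\<in>U. det (e x) \<noteq> 0"
    and "\<forall>a. smooth_on U (\<lambda>x. \<nu> x $ a)"
    and "\<forall>a i j. smooth_on U (\<lambda>x. \<Gamma> x a $ i $ j)"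
    and "weyl_connection U e \<nu> \<Gamma>"
    and "\<forall>x\<in>U. dform_nonzero_at \<nu> x"
    and "einstein_weyl U e \<Gamma>"
    and "reduced_holonomy U \<Gamma>"
  shows "flat_on U \<Gamma>"
proof -
  have False if pU: "p \<in> U" for p
  proof -
    obtain V where V: "open V" "p \<in> V" "V \<subseteq> U" "reduced_on V \<Gamma>"
      using assms(9) pU unfolding reduced_holonomy_def by blast
    obtain h A where h: "lie_subalgebra h" "h \<subseteq> co3" "h \<noteq> co3"
      and As: "\<forall>i j. smooth_on V (\<lambda>x. A x $ i $ j)"
      and AV: "\<forall>x\<in>V. A x \<in> CO3 \<and> (\<forall>a. matrix_inv (A x) ** \<Gamma> x a ** A x
              + matrix_inv (A x) ** (\<chi> i j. pd a (\<lambda>y. A y $ i $ j) x) \<in> h)"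
      using V(4) unfolding reduced_on_def by blast
    have hs: "subspace h" and hb: "\<forall>X\<in>h. \<forall>Y\<in>h. X ** Y - Y ** X \<in> h"
      using h(1) unfolding lie_subalgebra_def by auto
    have AC: "\<forall>x\<in>V. A x \<in> CO3" using AV by blast
    have Ah: "\<forall>x\<in>V. \<forall>a. matrix_inv (A x) ** \<Gamma> x a ** A x
              + matrix_inv (A x) ** (\<chi> i j. pd a (\<lambda>y. A y $ i $ j) x) \<in> h" using AV by blast
    have ApC: "A p \<in> CO3" using AC V by blast
    define S where "S = (\<lambda>M. A p ** M ** matrix_inv (A p)) ` h"
    have S: "subspace S" "\<forall>X\<in>S. \<forall>Y\<in>S. X ** Y - Y ** X \<in> S" "S \<subseteq> co3" "S \<noteq> co3"
      using conj_props[OF ApC h] unfolding S_def by auto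
    have GsV: "\<forall>a i j. smooth_on V (\<lambda>x. \<Gamma> x a $ i $ j)" using assms(5) V(3) smooth_mono by blast
    have OmS: "(\<chi> i j. curv \<Gamma> p i j a b) \<in> S" for a b
    proof -
      obtain M where M: "M \<in> h" "A p ** M = (\<chi> i j. curv \<Gamma> p i j a b) ** A p"
        using gauge_curv[OF V(1,2) GsV As AC Ah hs hb] by blast
      have AI: "A p ** matrix_inv (A p) = mat 1" using CO3_facts(4)[OF ApC] .
      have "(\<chi> i j. curv \<Gamma> p i j a b) = ((\<chi> i j. curv \<Gamma> p i j a b) ** A p) ** matrix_inv (A p)"
        using AI by (simp add: matrix_mul_assoc[symmetric])
      also have "\<dots> = A p ** M ** matrix_inv (A p)" using M by simp
      finally show ?thesis using M unfolding S_def by blast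
    qed
    have einv: "invertible (e p)" using assms(3) pU invertible_det_nz by blast
    have eI: "matrix_inv (e p) ** e p = mat 1" using inv_props[OF einv] by blast
    define \<Phi> where "\<Phi> k l = (\<chi> i j. curvF e \<Gamma> p i j k l)" for k l
    have \<Phi>S: "\<Phi> k l \<in> S" for k l
      unfolding \<Phi>_def curvF_mat using S(1) OmS by (intro subspace_sum subspace_scale) auto
    have \<Phi>co: "\<Phi> k l \<in> co3" for k l using \<Phi>S S(3) by blast
    have \<Phi>anti: "\<Phi> k l = - \<Phi> l k" for k l
    proof -
      let ?Ei = "matrix_inv (e p)"
      have "curvF e \<Gamma> p i j l k = - curvF e \<Gamma> p i j k l" for i j
      proof -
        have "curvF e \<Gamma> p i j l k = (\<Sum>b\<in>UNIV. \<Sum>a\<in>UNIV. curv \<Gamma> p i j a b * ?Ei $ a $ l * ?Ei $ b $ k)"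
          unfolding curvF_def by (rule sum.swap)
        also have "\<dots> = (\<Sum>b\<in>UNIV. \<Sum>a\<in>UNIV. - (curv \<Gamma> p i j b a * ?Ei $ b $ k * ?Ei $ a $ l))"
          by (intro sum.cong refl) (subst curv_anti, simp)
        also have "\<dots> = - curvF e \<Gamma> p i j k l" unfolding curvF_def by (simp add: sum_negf)
        finally show ?thesis .
      qed
      then show ?thesis unfolding \<Phi>_def by (simp add: vec_eq_iff)
    qed
    have ew: "((\<Sum>k\<in>UNIV. \<Phi> k j $ k $ i) + (\<Sum>k\<in>UNIV. \<Phi> k i $ k $ j)) / 2
                - (\<Sum>i'\<in>UNIV. \<Sum>k\<in>UNIV. \<Phi> k i' $ k $ i') / 3 * kd i j = 0" for i j
      using assms(8) pU unfolding einstein_weyl_def ricci_def scal_def \<Phi>_def by simp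
    have cff: "curv \<Gamma> p i j a b = (\<Sum>k\<in>UNIV. \<Sum>l\<in>UNIV. e p $ k $ a * e p $ l $ b * \<Phi> k l $ i $ j)" for i j a b
      unfolding \<Phi>_def using curv_from_frame[where e=e and x=p, OF eI] by simp
    have tr0: "(\<Sum>i\<in>UNIV. curv \<Gamma> p i i a b) = 0" for a b
    proof (cases "\<exists>k l. \<Phi> k l $ 1 $ 1 \<noteq> 0")
      case False
      have "\<Phi> k l $ i $ i = 0" for k l i
        using exhaust_3[of i] co3_entries[OF \<Phi>co[of k l]] False by auto
      then show ?thesis unfolding cff by simp
    next
      case True
      then obtain k0 l0 where kl0: "\<Phi> k0 l0 $ 1 $ 1 \<noteq> 0" by blast
      have comm: "\<Phi> k l ** \<Phi> m n = \<Phi> m n ** \<Phi> k l" for k l m n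
        by (rule lie_commute[OF S \<Phi>S \<Phi>S \<Phi>S kl0])
      have offd: "\<Phi> k l $ i $ j = 0 \<or> i = j" for k l i j
        by (rule ew_alg[OF \<Phi>anti \<Phi>co ew comm])
      have diag: "\<Phi> k l $ i $ i = \<Phi> k l $ 1 $ 1" for k l i
        using exhaust_3[of i] co3_entries[OF \<Phi>co[of k l]] by auto
      have \<Phi>kd: "\<Phi> k l $ i $ j = \<Phi> k l $ 1 $ 1 * kd i j" for k l i j
        using offd[of k l i j] diag[of k l i] by (auto simp: kd_def)
      define f where "f a b = (\<Sum>k\<in>UNIV. \<Sum>l\<in>UNIV. e p $ k $ a * e p $ l $ b * \<Phi> k l $ 1 $ 1)" for a b
      have cf: "curv \<Gamma> p i j a b = f a b * kd i j" for i j a b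
      proof -
        have "curv \<Gamma> p i j a b = (\<Sum>k\<in>UNIV. \<Sum>l\<in>UNIV. e p $ k $ a * e p $ l $ b * (\<Phi> k l $ 1 $ 1 * kd i j))"
          unfolding cff by (intro sum.cong refl) (subst \<Phi>kd, rule refl)
        also have "\<dots> = f a b * kd i j" unfolding f_def by (simp add: sum_distrib_left sum_distrib_right mult_ac)
        finally show ?thesis .
      qed
      have tor: "\<forall>x\<in>U. \<forall>i a b. pd a (\<lambda>y. e y $ i $ b) x - pd b (\<lambda>y. e y $ i $ a) x
        + (\<Sum>j\<in>UNIV. \<Gamma> x a $ i $ j * e x $ j $ b - \<Gamma> x b $ i $ j * e x $ j $ a) = 0"
        using assms(6) unfolding weyl_connection_def by blast
      have skd: "(\<Sum>k\<in>UNIV. f x y * kd i k * e p $ k $ z) = f x y * e p $ i $ z" for x y i z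
        by (simp add: kd_def if_distrib if_distribR cong: if_cong)
      have B: "f 3 1 * e p $ i $ 2 + f 1 2 * e p $ i $ 3 + f 2 3 * e p $ i $ 1 = 0" for i
        using bianchi_at[OF assms(1) pU assms(2) assms(5) tor, of i 3 1 2] unfolding cf skd .
      define v :: "real^3" where "v = vector [f 2 3, f 3 1, f 1 2]"
      have "e p *v v = 0"
        using B unfolding v_def by (simp add: vec_eq_iff matrix_vector_mult_def sum_3 algebra_simps)
      then have "v = 0"
        using eI by (metis matrix_vector_mul_assoc matrix_vector_mul_lid matrix_vector_mult_0_right)
      then have f0: "f 2 3 = 0" "f 3 1 = 0" "f 1 2 = 0" unfolding v_def by (simp_all add: vec_eq_iff forall_3)
      have fc: "f a b = curv \<Gamma> p 1 1 a b" for a b using cf[of 1 1 a b] by (simp add: kd_def)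
      have fa: "f a b = - f b a" for a b unfolding fc by (rule curv_anti)
      have fd: "f a a = 0" for a using fa[of a a] by simp
      have "f a b = 0"
        using exhaust_3[of a] exhaust_3[of b] f0 fd fa[of 3 2] fa[of 1 3] fa[of 2 1] by auto
      then show ?thesis unfolding cf by simp
    qed
    have "pd a (\<lambda>y. \<nu> y $ b) p - pd b (\<lambda>y. \<nu> y $ a) p = 0" for a b
      using trace_curv[OF assms(1) pU assms(6), of a b] tr0[of a b] by simp
    then show False using assms(7) pU unfolding dform_nonzero_at_def by blast
  qed
  then show ?thesis unfolding flat_on_def by blast
qed

end
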